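(* Let $m\ge3$, $p\in[m]$, and let $\lambda_1,\lambda_2$ be $\mathbb{Z}_2$-characteristic maps over $P_m$. Then the D-J classes of $\lambda_1$ and $\lambda_2$ are $p$-adjacent if and only if $\operatorname{supp}_{\lambda_1}p=\operatorname{supp}_{\lambda_2}p$.
   Context: $P_m$ is the simplicial complex on $[m]$ with facets $\{i,i+1\}$ (mod $m$). For a pure $(n-1)$-dimensional simplicial complex $K$ on a vertex set $V$, a $\mathbb{Z}_2$-characteristic map over $K$ is a map $\lambda\colon V\to\mathbb{Z}_2^n$ such that the images of the vertices of every face are linearly independent; $\lambda,\lambda'$ are D-J equivalent if $\lambda'=\phi\circ\lambda$ with $\phi\in GL(n,\mathbb{Z}_2)$. For a face $\sigma$ of $K$, the projection $\operatorname{proj}_\sigma\lambda$ is the characteristic map over the link $\operatorname{lk}_K\sigma$ given by $w\mapsto[\lambda(w)]\in\mathbb{Z}_2^n/\langle\lambda(v):v\in\sigma\rangle\cong\mathbb{Z}_2^{n-|\sigma|}$ (well defined up to D-J equivalence). The wedge $\mathrm{wed}_pK$ is the simplicial complex on $(V\setminus\{p\})\cup\{p_1,p_2\}$ whose minimal non-faces are the minimal non-faces of $K$ not containing $p$, together with $(\tau\setminus\{p\})\cup\{p_1,p_2\}$ for each minimal non-face $\tau\ni p$ of $K$. The link of $p_2$ (resp. $p_1$) in $\mathrm{wed}_pK$ is identified with $K$ via $p_1\mapsto p$ (resp. $p_2\mapsto p$) and identity on other vertices. Two D-J classes $\lambda_1,\lambda_2$ over $K$ are $p$-adjacent if there is a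 $\mathbb{Z}_2$-characteristic map $\Lambda$ over $\mathrm{wed}_pK$ with $\operatorname{proj}_{p_2}\Lambda\simeq\lambda_1$ and $\operatorname{proj}_{p_1}\Lambda\simeq\lambda_2$ (D-J equivalent); $\lambda_1=\lambda_2$ is allowed. For a characteristic map $\lambda$ over $P_m$, $\operatorname{supp}_\lambda p=\lambda^{-1}(\lambda(p))$, which depends only on the D-J class. *)

theory Defs
  imports Main
begin

text \<open>A vector of Z_2^n is a function nat => bool vanishing outside {0..<n};
addition is pointwise exclusive or.\<close>

type_synonym z2vec = "nat \<Rightarrow> bool"

definition vec :: "nat \<Rightarrow> z2vec set" where
  "vec n = {x. \<forall>i\<ge>n. \<not> x i}"

definition vzero :: z2vec where
  "vzero = (\<lambda>_. False)"

definition vadd :: "z2vec \<Rightarrow> z2vec \<Rightarrow> z2vec" where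
  "vadd x y = (\<lambda>i. x i \<noteq> y i)"

definition vsum :: "('a \<Rightarrow> z2vec) \<Rightarrow> 'a set \<Rightarrow> z2vec" where
  "vsum f T = (\<lambda>i. odd (card {v\<in>T. f v i}))"

definition lin_indep :: "('a \<Rightarrow> z2vec) \<Rightarrow> 'a set \<Rightarrow> bool" where
  "lin_indep f S \<longleftrightarrow> finite S \<and> inj_on f S \<and>
     (\<forall>T\<subseteq>S. T \<noteq> {} \<longrightarrow> vsum f T \<noteq> vzero)"

definition vspan :: "('a \<Rightarrow> z2vec) \<Rightarrow> 'a set \<Rightarrow> z2vec set" where
  "vspan f S = {vsum f T | T. T \<subseteq> S}"

definition linear_z2 :: "nat \<Rightarrow> nat \<Rightarrow> (z2vec \<Rightarrow> z2vec) \<Rightarrow> bool" where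
  "linear_z2 n k \<phi> \<longleftrightarrow> (\<forall>x\<in>vec n. \<phi> x \<in> vec k) \<and>
     (\<forall>x\<in>vec n. \<forall>y\<in>vec n. \<phi> (vadd x y) = vadd (\<phi> x) (\<phi> y))"

definition GL_z2 :: "nat \<Rightarrow> (z2vec \<Rightarrow> z2vec) \<Rightarrow> bool" where
  "GL_z2 n \<phi> \<longleftrightarrow> linear_z2 n n \<phi> \<and> bij_betw \<phi> (vec n) (vec n)"

text \<open>A simplicial complex is given by its set of faces K on a vertex set V.\<close>

definition char_map :: "'a set set \<Rightarrow> 'a set \<Rightarrow> nat \<Rightarrow> ('a \<Rightarrow> z2vec) \<Rightarrow> bool" where
  "char_map K V n lam \<longleftrightarrow> (\<forall>v\<in>V. lam v \<in> vec n) \<and> (\<forall>\<sigma>\<in>K. lin_indep lam \<sigma>)"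

definition DJ_equiv :: "'a set \<Rightarrow> nat \<Rightarrow> ('a \<Rightarrow> z2vec) \<Rightarrow> ('a \<Rightarrow> z2vec) \<Rightarrow> bool" where
  "DJ_equiv V n lam lam' \<longleftrightarrow> (\<exists>\<phi>. GL_z2 n \<phi> \<and> (\<forall>v\<in>V. lam' v = \<phi> (lam v)))"

definition link :: "'a set set \<Rightarrow> 'a set \<Rightarrow> 'a set set" where
  "link K \<sigma> = {\<tau>\<in>K. \<tau> \<inter> \<sigma> = {} \<and> \<tau> \<union> \<sigma> \<in> K}"

definition link_verts :: "'a set set \<Rightarrow> 'a set \<Rightarrow> 'a set" where
  "link_verts K \<sigma> = {w. {w} \<in> link K \<sigma>}"

text \<open>mu is a projection of Lambda (char. map of dimension n) at the face sigma:
  mu = psi o Lambda on the link, where psi : Z_2^n -> Z_2^(n-|sigma|) is a linear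
  surjection with kernel span(Lambda(sigma)), i.e. psi realizes an isomorphism
  Z_2^n / <Lambda(v) : v in sigma> = Z_2^(n-|sigma|).\<close>
definition is_proj :: "'a set set \<Rightarrow> nat \<Rightarrow> ('a \<Rightarrow> z2vec) \<Rightarrow> 'a set \<Rightarrow> ('a \<Rightarrow> z2vec) \<Rightarrow> bool" where
  "is_proj K n \<Lambda> \<sigma> \<mu> \<longleftrightarrow> (\<exists>\<psi>. linear_z2 n (n - card \<sigma>) \<psi> \<and>
      \<psi> ` vec n = vec (n - card \<sigma>) \<and>
      {x\<in>vec n. \<psi> x = vzero} = vspan \<Lambda> \<sigma> \<and>
      (\<forall>w\<in>link_verts K \<sigma>. \<mu> w = \<psi> (\<Lambda> w)))"

definition proj_DJ :: "'a set set \<Rightarrow> nat \<Rightarrow> ('a \<Rightarrow> z2vec) \<Rightarrow> 'a set \<Rightarrow> ('a \<Rightarrow> z2vec) \<Rightarrow> bool" where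
  "proj_DJ K n \<Lambda> \<sigma> lam' \<longleftrightarrow> (\<exists>\<mu>. is_proj K n \<Lambda> \<sigma> \<mu> \<and>
      DJ_equiv (link_verts K \<sigma>) (n - card \<sigma>) \<mu> lam')"

definition min_nonfaces :: "'a set set \<Rightarrow> 'a set \<Rightarrow> 'a set set" where
  "min_nonfaces K V = {\<tau>. \<tau> \<subseteq> V \<and> \<tau> \<notin> K \<and> (\<forall>\<rho>. \<rho> \<subset> \<tau> \<longrightarrow> \<rho> \<in> K)}"

text \<open>Vertices of wed_p K: Inl v for v in V - {p}, p1 = Inr False, p2 = Inr True.\<close>
abbreviation p1 :: "'a + bool" where "p1 \<equiv> Inr False"
abbreviation p2 :: "'a + bool" where "p2 \<equiv> Inr True"

definition wed_verts :: "'a set \<Rightarrow> 'a \<Rightarrow> ('a + bool) set" where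
  "wed_verts V p = Inl ` (V - {p}) \<union> {p1, p2}"

definition wed_min_nonfaces :: "'a set set \<Rightarrow> 'a set \<Rightarrow> 'a \<Rightarrow> ('a + bool) set set" where
  "wed_min_nonfaces K V p =
     {Inl ` \<tau> | \<tau>. \<tau> \<in> min_nonfaces K V \<and> p \<notin> \<tau>} \<union>
     {Inl ` (\<tau> - {p}) \<union> {p1, p2} | \<tau>. \<tau> \<in> min_nonfaces K V \<and> p \<in> \<tau>}"

definition wed :: "'a set set \<Rightarrow> 'a set \<Rightarrow> 'a \<Rightarrow> ('a + bool) set set" where
  "wed K V p = {\<sigma>. \<sigma> \<subseteq> wed_verts V p \<and> (\<forall>\<tau>\<in>wed_min_nonfaces K V p. \<not> \<tau> \<subseteq> \<sigma>)}"

text \<open>Identification of lk p2 with K (p1 -> p) and of lk p1 with K (p2 -> p).\<close>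
definition ident2 :: "'a \<Rightarrow> 'a + bool \<Rightarrow> 'a" where
  "ident2 p w = (case w of Inl v \<Rightarrow> v | Inr _ \<Rightarrow> p)"

definition ident1 :: "'a \<Rightarrow> 'a + bool \<Rightarrow> 'a" where
  "ident1 p w = (case w of Inl v \<Rightarrow> v | Inr _ \<Rightarrow> p)"

definition p_adjacent :: "'a set set \<Rightarrow> 'a set \<Rightarrow> nat \<Rightarrow> 'a \<Rightarrow> ('a \<Rightarrow> z2vec) \<Rightarrow> ('a \<Rightarrow> z2vec) \<Rightarrow> bool" where
  "p_adjacent K V n p lam1 lam2 \<longleftrightarrow> (\<exists>\<Lambda>. char_map (wed K V p) (wed_verts V p) (n + 1) \<Lambda> \<and>
      proj_DJ (wed K V p) (n + 1) \<Lambda> {p2} (lam1 \<circ> ident2 p) \<and>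
      proj_DJ (wed K V p) (n + 1) \<Lambda> {p1} (lam2 \<circ> ident1 p))"

definition polygon :: "nat \<Rightarrow> nat set set" where
  "polygon m = {\<sigma>. \<sigma> \<subseteq> {1..m} \<and> card \<sigma> \<le> 1} \<union> {{i, i mod m + 1} | i. i \<in> {1..m}}"

definition supp :: "'a set \<Rightarrow> ('a \<Rightarrow> z2vec) \<Rightarrow> 'a \<Rightarrow> 'a set" where
  "supp V lam p = {v\<in>V. lam v = lam p}"

end

theory Submission
  imports Defs
begin

lemma vadd_comm: "vadd x y = vadd y x" by (auto simp: vadd_def fun_eq_iff)
lemma vadd_self[simp]: "vadd x x = vzero" by (auto simp: vadd_def vzero_def)
lemma vadd_zero[simp]: "vadd x vzero = x" "vadd vzero x = x" by (auto simp: vadd_def vzero_def)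
lemma vadd_eq_zero: "vadd x y = vzero \<longleftrightarrow> x = y" by (auto simp: vadd_def vzero_def fun_eq_iff)
lemma vadd_vec: "x \<in> vec n \<Longrightarrow> y \<in> vec n \<Longrightarrow> vadd x y \<in> vec n" by (auto simp: vec_def vadd_def)
lemma vzero_vec[simp]: "vzero \<in> vec n" by (simp add: vec_def vzero_def)

lemma linear_zero: assumes l: "linear_z2 n k \<psi>" shows "\<psi> vzero = vzero"
proof -
  have "\<forall>x\<in>vec n. \<forall>y\<in>vec n. \<psi> (vadd x y) = vadd (\<psi> x) (\<psi> y)" using l by (simp add: linear_z2_def)
  hence "\<psi> (vadd vzero vzero) = vadd (\<psi> vzero) (\<psi> vzero)" by (meson vzero_vec)
  thus ?thesis by simp
qed

lemma vsum_empty[simp]: "vsum f {} = vzero" by (simp add: vsum_def vzero_def)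
lemma vsum_single[simp]: "vsum f {x} = f x"
proof (rule ext)
  fix i
  have "{v\<in>{x}. f v i} = (if f x i then {x} else {})" by auto
  thus "vsum f {x} i = f x i" by (simp add: vsum_def)
qed

lemma vsum_insert: assumes "finite T" "x \<notin> T"
  shows "vsum f (insert x T) = vadd (f x) (vsum f T)"
proof (rule ext)
  fix i
  have "{v\<in>insert x T. f v i} = (if f x i then insert x {v\<in>T. f v i} else {v\<in>T. f v i})" by auto
  thus "vsum f (insert x T) i = vadd (f x) (vsum f T) i"
    using assms by (simp add: vsum_def vadd_def)
qed

lemma vsum_vec: "\<forall>x\<in>T. f x \<in> vec n \<Longrightarrow> vsum f T \<in> vec n"
proof -
  assume a: "\<forall>x\<in>T. f x \<in> vec n"
  have "\<And>i. i \<ge> n \<Longrightarrow> {v\<in>T. f v i} = {}" using a by (auto simp: vec_def)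
  hence "\<And>i. i \<ge> n \<Longrightarrow> card {v\<in>T. f v i} = 0" by (simp only: card.empty)
  hence "\<And>i. i \<ge> n \<Longrightarrow> \<not> vsum f T i" by (simp add: vsum_def)
  thus ?thesis by (simp add: vec_def)
qed

lemma linear_vsum:
  assumes l: "linear_z2 n k \<psi>" and "finite T" and "\<forall>x\<in>T. f x \<in> vec n"
  shows "\<psi> (vsum f T) = vsum (\<psi> \<circ> f) T"
  using assms(2,3)
proof (induction T rule: finite_induct)
  case empty thus ?case using linear_zero[OF l] by simp
next
  case (insert x F)
  have a: "vsum f F \<in> vec n" using insert.prems by (intro vsum_vec) simp
  have b: "f x \<in> vec n" using insert.prems by simp
  have add: "\<forall>x\<in>vec n. \<forall>y\<in>vec n. \<psi> (vadd x y) = vadd (\<psi> x) (\<psi> y)" using l by (simp add: linear_z2_def)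
  have "\<psi> (vsum f (insert x F)) = \<psi> (vadd (f x) (vsum f F))" using insert by (simp add: vsum_insert)
  also have "\<dots> = vadd (\<psi> (f x)) (\<psi> (vsum f F))" using add a b by blast
  also have "\<dots> = vadd ((\<psi> \<circ> f) x) (vsum (\<psi> \<circ> f) F)" using insert by (simp add: comp_def)
  also have "\<dots> = vsum (\<psi> \<circ> f) (insert x F)" using insert by (simp add: vsum_insert)
  finally show ?case .
qed

lemma vsum_remove_zero: "f q = vzero \<Longrightarrow> vsum f T = vsum f (T - {q})"
proof -
  assume "f q = vzero"
  hence "\<And>i. {v\<in>T. f v i} = {v\<in>T - {q}. f v i}" by (auto simp: vzero_def)
  thus ?thesis by (simp add: vsum_def)
qed

lemma vsum_cong: "\<forall>x\<in>T. f x = g x \<Longrightarrow> vsum f T = vsum g T"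
proof -
  assume "\<forall>x\<in>T. f x = g x"
  hence "\<And>i. {v\<in>T. f v i} = {v\<in>T. g v i}" by auto
  thus ?thesis by (simp add: vsum_def)
qed

lemma vsum_image: assumes "inj_on g T" shows "vsum f (g ` T) = vsum (f \<circ> g) T"
proof -
  have "\<And>i. {u\<in>g ` T. f u i} = g ` {v\<in>T. f (g v) i}" by auto
  moreover have "\<And>i. card (g ` {v\<in>T. f (g v) i}) = card {v\<in>T. f (g v) i}"
    by (rule card_image) (use assms in \<open>auto intro: inj_on_subset\<close>)
  ultimately show ?thesis by (simp add: vsum_def)
qed

lemma lin_indep_subset: "lin_indep f S \<Longrightarrow> T \<subseteq> S \<Longrightarrow> lin_indep f T"
proof -
  assume a: "lin_indep f S" "T \<subseteq> S"
  have "finite T" using a finite_subset unfolding lin_indep_def by blast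
  moreover have "inj_on f T" using a inj_on_subset unfolding lin_indep_def by blast
  moreover have "\<forall>U\<subseteq>T. U \<noteq> {} \<longrightarrow> vsum f U \<noteq> vzero" using a unfolding lin_indep_def by blast
  ultimately show ?thesis unfolding lin_indep_def by blast
qed

lemma lin_indep_cong: "lin_indep f S \<Longrightarrow> \<forall>x\<in>S. f x = g x \<Longrightarrow> lin_indep g S"
proof -
  assume a: "lin_indep f S" "\<forall>x\<in>S. f x = g x"
  have "inj_on f S" using a(1) unfolding lin_indep_def by blast
  hence "inj_on g S" using inj_on_cong[of S f g] a(2) by simp
  moreover have "vsum g T \<noteq> vzero" if "T \<subseteq> S" "T \<noteq> {}" for T
  proof -
    have "vsum f T = vsum g T" using a that by (intro vsum_cong) blast
    moreover have "vsum f T \<noteq> vzero" using a(1) that unfolding lin_indep_def by blast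
    ultimately show ?thesis by simp
  qed
  moreover have "finite S" using a(1) unfolding lin_indep_def by blast
  ultimately show ?thesis unfolding lin_indep_def by blast
qed

lemma lin_indep_image: assumes "lin_indep f (g ` S)" "inj_on g S" shows "lin_indep (f \<circ> g) S"
  unfolding lin_indep_def
proof (intro conjI allI impI)
  show "finite S" using assms by (simp add: lin_indep_def finite_image_iff)
  show "inj_on (f \<circ> g) S" using assms by (simp add: lin_indep_def comp_inj_on)
  fix T assume T: "T \<subseteq> S" "T \<noteq> {}"
  have "vsum (f \<circ> g) T = vsum f (g ` T)" using vsum_image assms(2) T inj_on_subset by metis
  moreover have "g ` T \<subseteq> g ` S" "g ` T \<noteq> {}" using T by auto
  moreover have "\<forall>T'\<subseteq>g ` S. T' \<noteq> {} \<longrightarrow> vsum f T' \<noteq> vzero" using assms(1) unfolding lin_indep_def by blast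
  ultimately show "vsum (f \<circ> g) T \<noteq> vzero" by metis
qed

lemma lin_indep_pull:
  assumes l: "linear_z2 n k \<phi>" and v: "\<forall>x\<in>S. f x \<in> vec n" and li: "lin_indep (\<phi> \<circ> f) S"
  shows "lin_indep f S"
  unfolding lin_indep_def
proof (intro conjI allI impI)
  show "finite S" using li by (simp add: lin_indep_def)
  show "inj_on f S" using li by (auto simp: lin_indep_def inj_on_def)
  fix T assume T: "T \<subseteq> S" "T \<noteq> {}"
  have fT: "finite T" using li T finite_subset by (auto simp: lin_indep_def)
  have "\<phi> (vsum f T) = vsum (\<phi> \<circ> f) T" using linear_vsum[OF l fT] v T by auto
  moreover have "vsum (\<phi> \<circ> f) T \<noteq> vzero" using li T by (auto simp: lin_indep_def)
  ultimately show "vsum f T \<noteq> vzero" using linear_zero[OF l] by auto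
qed

lemma lin_indep_lift:
  assumes l: "linear_z2 n k \<psi>" and v: "\<forall>x\<in>\<sigma>. \<Lambda> x \<in> vec n" and q: "q \<in> \<sigma>"
    and z: "\<psi> (\<Lambda> q) = vzero" and nz: "\<Lambda> q \<noteq> vzero" and fin: "finite \<sigma>"
    and li: "lin_indep (\<psi> \<circ> \<Lambda>) (\<sigma> - {q})"
  shows "lin_indep \<Lambda> \<sigma>"
proof -
  have li1: "inj_on (\<psi> \<circ> \<Lambda>) (\<sigma> - {q})" and
    li2: "\<And>T. T \<subseteq> \<sigma> - {q} \<Longrightarrow> T \<noteq> {} \<Longrightarrow> vsum (\<psi> \<circ> \<Lambda>) T \<noteq> vzero"
    using li unfolding lin_indep_def by blast+
  have nzs: "\<psi> (\<Lambda> y) \<noteq> vzero" if "y \<in> \<sigma>" "y \<noteq> q" for y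
  proof -
    have "vsum (\<psi> \<circ> \<Lambda>) {y} \<noteq> vzero" using that by (intro li2) auto
    thus ?thesis by simp
  qed
  have inj: "inj_on \<Lambda> \<sigma>"
  proof (rule inj_onI)
    fix x y assume xy: "x \<in> \<sigma>" "y \<in> \<sigma>" "\<Lambda> x = \<Lambda> y"
    show "x = y"
    proof (cases "x = q \<or> y = q")
      case True thus ?thesis using nzs xy z by force
    next
      case False
      hence "(\<psi> \<circ> \<Lambda>) x = (\<psi> \<circ> \<Lambda>) y" using xy by simp
      thus ?thesis using li1 False xy unfolding inj_on_def by blast
    qed
  qed
  have s: "vsum \<Lambda> T \<noteq> vzero" if T: "T \<subseteq> \<sigma>" "T \<noteq> {}" for T
  proof
    assume s: "vsum \<Lambda> T = vzero"
    have fT: "finite T" using fin T finite_subset by auto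
    have vT: "\<forall>x\<in>T. \<Lambda> x \<in> vec n" using v T by blast
    have "\<psi> (vsum \<Lambda> T) = vsum (\<psi> \<circ> \<Lambda>) T" using linear_vsum[OF l fT vT] .
    also have "\<dots> = vsum (\<psi> \<circ> \<Lambda>) (T - {q})" using z by (intro vsum_remove_zero) simp
    finally have "vsum (\<psi> \<circ> \<Lambda>) (T - {q}) = vzero" using s linear_zero[OF l] by simp
    hence "T - {q} = {}" using li2[of "T - {q}"] T by blast
    hence "T = {q}" using T by blast
    thus False using s nz by simp
  qed
  show ?thesis unfolding lin_indep_def using fin inj s by blast
qed

lemma vec2_eq: assumes "x \<in> vec 2" "y \<in> vec 2" shows "(x = y) = (x 0 = y 0 \<and> x 1 = y 1)"
proof
  assume "x 0 = y 0 \<and> x 1 = y 1"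
  moreover have "\<And>i. i \<ge> 2 \<Longrightarrow> x i = y i" using assms by (simp add: vec_def)
  ultimately show "x = y"
  proof (intro ext)
    fix i assume h: "x 0 = y 0 \<and> x 1 = y 1" "\<And>i. i \<ge> 2 \<Longrightarrow> x i = y i"
    show "x i = y i"
    proof (cases "i = 0 \<or> i = 1")
      case True thus ?thesis using h by auto
    next
      case False hence "i \<ge> 2" by auto
      thus ?thesis using h by auto
    qed
  qed
qed simp

lemma vec2_nz: assumes "x \<in> vec 2" shows "(x = vzero) = (\<not> x 0 \<and> \<not> x 1)"
proof -
  have "(x = vzero) = (x 0 = vzero 0 \<and> x 1 = vzero 1)" using vec2_eq[OF assms vzero_vec] .
  thus ?thesis by (simp add: vzero_def)
qed

lemma vec2_two:
  assumes "a \<in> vec 2" "x \<in> vec 2" "y \<in> vec 2" "a \<noteq> vzero" "x \<noteq> vzero" "y \<noteq> vzero" "x \<noteq> a" "y \<noteq> a"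
  shows "y = x \<or> y = vadd x a"
proof -
  have v: "vadd x a \<in> vec 2" using assms by (simp add: vadd_vec)
  show ?thesis using assms v by (simp add: vec2_eq vec2_nz) (auto simp: vadd_def vzero_def)
qed

definition m2 :: "bool \<Rightarrow> bool \<Rightarrow> bool \<Rightarrow> bool \<Rightarrow> z2vec \<Rightarrow> z2vec" where
  "m2 p q r s x = (\<lambda>i. if i = 0 then (p \<and> x 0) \<noteq> (q \<and> x 1) else if i = 1 then (r \<and> x 0) \<noteq> (s \<and> x 1) else False)"

lemma m2_vec: "m2 p q r s x \<in> vec 2" by (simp add: m2_def vec_def)
lemma m2_add: "m2 p q r s (vadd x y) = vadd (m2 p q r s x) (m2 p q r s y)"
  by (auto simp: m2_def vadd_def fun_eq_iff)
lemma m2_inv: assumes "(p \<and> s) \<noteq> (q \<and> r)" "y \<in> vec 2" shows "m2 p q r s (m2 s q r p y) = y"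
  using assms m2_vec by (simp add: vec2_eq) (auto simp: m2_def)

lemma m2_GL: assumes d: "(p \<and> s) \<noteq> (q \<and> r)" shows "GL_z2 2 (m2 p q r s)"
proof -
  have d': "(s \<and> p) \<noteq> (q \<and> r)" using d by auto
  have lin: "linear_z2 2 2 (m2 p q r s)" by (simp add: linear_z2_def m2_vec m2_add)
  have inj: "inj_on (m2 p q r s) (vec 2)"
  proof (rule inj_onI)
    fix x y assume "x \<in> vec 2" "y \<in> vec 2" "m2 p q r s x = m2 p q r s y"
    thus "x = y" using m2_inv[OF d'] by metis
  qed
  have "m2 p q r s ` vec 2 = vec 2"
  proof
    show "m2 p q r s ` vec 2 \<subseteq> vec 2" using m2_vec by blast
    show "vec 2 \<subseteq> m2 p q r s ` vec 2"
    proof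
      fix y assume "y \<in> vec 2"
      hence "y = m2 p q r s (m2 s q r p y)" using m2_inv[OF d] by simp
      thus "y \<in> m2 p q r s ` vec 2" using m2_vec by blast
    qed
  qed
  thus ?thesis using lin inj by (simp add: GL_z2_def bij_betw_def)
qed

lemma GL_exists:
  assumes "a \<in> vec 2" "b \<in> vec 2" "a \<noteq> vzero" "b \<noteq> vzero"
  shows "\<exists>\<phi>. GL_z2 2 \<phi> \<and> \<phi> a = b"
proof -
  define p where "p = ((b 0 \<and> a 0) \<noteq> (\<not> b 0 \<and> a 1))"
  define q where "q = ((b 0 \<and> \<not> a 0) \<noteq> (\<not> b 0 \<and> a 0))"
  define r where "r = ((b 1 \<and> a 0) \<noteq> (b 0 \<and> a 1))"
  define s where "s = ((b 1 \<and> \<not> a 0) \<noteq> (b 0 \<and> a 0))"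
  have nz: "a 0 \<or> a 1" "b 0 \<or> b 1" using assms vec2_nz by blast+
  have d: "(p \<and> s) \<noteq> (q \<and> r)" using nz unfolding p_def q_def r_def s_def by auto
  have "m2 p q r s a = b" using nz assms m2_vec
    by (simp add: vec2_eq) (auto simp: m2_def p_def q_def r_def s_def)
  thus ?thesis using m2_GL[OF d] by blast
qed

lemma GL_facts:
  assumes "GL_z2 2 \<phi>"
  shows "\<phi> vzero = vzero" "\<And>x. x \<in> vec 2 \<Longrightarrow> \<phi> x \<in> vec 2"
    "\<And>x y. x \<in> vec 2 \<Longrightarrow> y \<in> vec 2 \<Longrightarrow> \<phi> (vadd x y) = vadd (\<phi> x) (\<phi> y)"
    "inj_on \<phi> (vec 2)" "linear_z2 2 2 \<phi>"
  using assms linear_zero[of 2 2 \<phi>] by (auto simp: GL_z2_def linear_z2_def bij_betw_def)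

lemma wed_verts_cases: "w \<in> wed_verts V p \<Longrightarrow> (\<exists>v. w = Inl v \<and> v \<in> V \<and> v \<noteq> p) \<or> (\<exists>c. w = Inr c)"
  by (auto simp: wed_verts_def)

lemma Inr_other:
  assumes "w \<in> wed_verts V p" "w \<noteq> Inr c"
  shows "(\<exists>v. w = Inl v \<and> v \<in> V \<and> v \<noteq> p) \<or> w = Inr (\<not> c)"
proof -
  have "w \<in> Inl ` (V - {p}) \<or> w = Inr False \<or> w = Inr True" using assms(1) by (auto simp: wed_verts_def)
  thus ?thesis using assms(2) by (cases c) auto
qed

lemma wed_subset: "\<sigma> \<in> wed K V p \<Longrightarrow> \<sigma>' \<subseteq> \<sigma> \<Longrightarrow> \<sigma>' \<in> wed K V p"
  unfolding wed_def by blast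

lemma wed_sub_verts: "\<sigma> \<in> wed K V p \<Longrightarrow> \<sigma> \<subseteq> wed_verts V p"
  unfolding wed_def by blast

lemma card_le1: "finite A \<Longrightarrow> A \<subseteq> {v} \<Longrightarrow> card A \<le> 1"
proof -
  assume "A \<subseteq> {v}"
  hence "card A \<le> card {v}" by (intro card_mono) auto
  thus ?thesis by simp
qed

lemma wed_pair:
  assumes mnf: "\<forall>\<tau>\<in>min_nonfaces K V. 2 \<le> card \<tau>" and v: "v \<in> V" "v \<noteq> p"
  shows "{Inl v, Inr c} \<in> wed K V p"
  unfolding wed_def
proof (intro CollectI conjI ballI)
  show "{Inl v, Inr c} \<subseteq> wed_verts V p" using v by (auto simp: wed_verts_def)
  fix t assume t: "t \<in> wed_min_nonfaces K V p"
  show "\<not> t \<subseteq> {Inl v, Inr c}"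
  proof
    assume sub: "t \<subseteq> {Inl v, Inr c}"
    from t consider (a) \<tau> where "t = Inl ` \<tau>" "\<tau> \<in> min_nonfaces K V"
      | (b) \<tau> where "t = Inl ` (\<tau> - {p}) \<union> {Inr False, Inr True}" "\<tau> \<in> min_nonfaces K V"
      unfolding wed_min_nonfaces_def by blast
    thus False
    proof cases
      case a
      hence "\<tau> \<subseteq> {v}" using sub by auto
      hence "card \<tau> \<le> 1" by (meson card_le1 finite.intros finite_subset)
      thus False using mnf a by fastforce
    next
      case b thus False using sub by (cases c) auto
    qed
  qed
qed

lemma wed_p12:
  assumes mnf: "\<forall>\<tau>\<in>min_nonfaces K V. 2 \<le> card \<tau>"
  shows "{Inr c, Inr (\<not> c)} \<in> wed K V p"
  unfolding wed_def
proof (intro CollectI conjI ballI)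
  show "{Inr c, Inr (\<not> c)} \<subseteq> wed_verts V p" by (auto simp: wed_verts_def)
  fix t assume t: "t \<in> wed_min_nonfaces K V p"
  show "\<not> t \<subseteq> {Inr c, Inr (\<not> c)}"
  proof
    assume sub: "t \<subseteq> {Inr c, Inr (\<not> c)}"
    from t consider (a) \<tau> where "t = Inl ` \<tau>" "\<tau> \<in> min_nonfaces K V"
      | (b) \<tau> where "t = Inl ` (\<tau> - {p}) \<union> {Inr False, Inr True}" "\<tau> \<in> min_nonfaces K V"
      unfolding wed_min_nonfaces_def by blast
    thus False
    proof cases
      case a
      hence "\<tau> = {}" using sub by auto
      thus False using mnf a by fastforce
    next
      case b
      hence "\<tau> \<subseteq> {p}" using sub by auto
      hence "card \<tau> \<le> 1" by (meson card_le1 finite.intros finite_subset)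
      thus False using mnf b by fastforce
    qed
  qed
qed

lemma wed_insert:
  assumes "\<sigma> \<in> wed K V p" "Inr (\<not> c) \<notin> \<sigma>"
  shows "insert (Inr c) \<sigma> \<in> wed K V p"
  unfolding wed_def
proof (intro CollectI conjI ballI)
  show "insert (Inr c) \<sigma> \<subseteq> wed_verts V p" using wed_sub_verts[OF assms(1)] by (auto simp: wed_verts_def)
  fix t assume t: "t \<in> wed_min_nonfaces K V p"
  show "\<not> t \<subseteq> insert (Inr c) \<sigma>"
  proof
    assume sub: "t \<subseteq> insert (Inr c) \<sigma>"
    from t consider (a) \<tau> where "t = Inl ` \<tau>" "\<tau> \<in> min_nonfaces K V"
      | (b) \<tau> where "t = Inl ` (\<tau> - {p}) \<union> {Inr False, Inr True}" "\<tau> \<in> min_nonfaces K V"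
      unfolding wed_min_nonfaces_def by blast
    thus False
    proof cases
      case a
      hence "t \<subseteq> \<sigma>" using sub by auto
      thus False using assms(1) t unfolding wed_def by blast
    next
      case b thus False using sub assms(2) by (cases c) auto
    qed
  qed
qed

lemma link_mem: "{w} \<in> K \<Longrightarrow> w \<notin> \<sigma> \<Longrightarrow> insert w \<sigma> \<in> K \<Longrightarrow> w \<in> link_verts K \<sigma>"
  by (simp add: link_verts_def link_def)

lemma link_wed_cases:
  assumes "w \<in> link_verts (wed K V p) {Inr c}"
  shows "(\<exists>v. w = Inl v \<and> v \<in> V \<and> v \<noteq> p) \<or> w = Inr (\<not> c)"
proof -
  have "{w} \<in> link (wed K V p) {Inr c}" using assms by (simp add: link_verts_def)
  hence a: "{w} \<in> wed K V p" and b: "{w} \<inter> {Inr c} = {}" unfolding link_def by simp_all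
  have "w \<in> wed_verts V p" using wed_sub_verts[OF a] by simp
  moreover have "w \<noteq> Inr c" using b by simp
  ultimately show ?thesis by (rule Inr_other)
qed

lemma link_wed_Inl:
  assumes mnf: "\<forall>\<tau>\<in>min_nonfaces K V. 2 \<le> card \<tau>" and v: "v \<in> V" "v \<noteq> p"
  shows "Inl v \<in> link_verts (wed K V p) {Inr c}"
proof (rule link_mem)
  show "insert (Inl v) {Inr c} \<in> wed K V p" using wed_pair[OF mnf v] by simp
  thus "{Inl v} \<in> wed K V p" by (rule wed_subset) auto
qed simp

lemma link_wed_Inr:
  assumes mnf: "\<forall>\<tau>\<in>min_nonfaces K V. 2 \<le> card \<tau>"
  shows "Inr (\<not> c) \<in> link_verts (wed K V p) {Inr c}"
proof (rule link_mem)
  show "insert (Inr (\<not> c)) {Inr c} \<in> wed K V p" using wed_p12[OF mnf, of c p] by (simp add: insert_commute)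
  thus "{Inr (\<not> c)} \<in> wed K V p" by (rule wed_subset) auto
qed simp

lemma exists_mnf: "finite \<tau> \<Longrightarrow> \<tau> \<subseteq> V \<Longrightarrow> \<tau> \<notin> K \<Longrightarrow> \<exists>\<rho>\<subseteq>\<tau>. \<rho> \<in> min_nonfaces K V"
proof (induction \<tau> rule: finite_psubset_induct)
  case (psubset A)
  show ?case
  proof (cases "\<forall>\<rho>. \<rho> \<subset> A \<longrightarrow> \<rho> \<in> K")
    case True
    hence "A \<in> min_nonfaces K V" using psubset.prems unfolding min_nonfaces_def by simp
    thus ?thesis by auto
  next
    case False
    then obtain B where B: "B \<subset> A" "B \<notin> K" by auto
    have "B \<subseteq> V" using psubset.prems(1) B(1) by (rule_tac subset_trans) auto
    then obtain \<rho> where \<rho>: "\<rho> \<subseteq> B" "\<rho> \<in> min_nonfaces K V" using psubset.IH[OF B(1) _ B(2)] by auto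
    have "\<rho> \<subseteq> A" using \<rho>(1) B(1) by auto
    thus ?thesis using \<rho>(2) by auto
  qed
qed

lemma ident2_simps[simp]: "ident2 p (Inl v) = v" "ident2 p (Inr c) = p"
  unfolding ident2_def by simp_all

lemma ident1_eq: "ident1 = ident2"
  unfolding ident1_def ident2_def by (rule refl)

lemma wed_face_proj:
  assumes finV: "finite V" and pV: "p \<in> V" and \<sigma>: "\<sigma> \<in> wed K V p" and c: "Inr c \<in> \<sigma>"
  shows "ident2 p ` (\<sigma> - {Inr c}) \<in> K" "inj_on (ident2 p) (\<sigma> - {Inr c})"
proof -
  have sv: "\<sigma> \<subseteq> wed_verts V p" using wed_sub_verts[OF \<sigma>] .
  have el: "\<And>w. w \<in> \<sigma> - {Inr c} \<Longrightarrow> (\<exists>v. w = Inl v \<and> v \<in> V \<and> v \<noteq> p) \<or> w = Inr (\<not> c)"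
  proof -
    fix w assume "w \<in> \<sigma> - {Inr c}"
    hence "w \<in> wed_verts V p" "w \<noteq> Inr c" using sv by auto
    thus "(\<exists>v. w = Inl v \<and> v \<in> V \<and> v \<noteq> p) \<or> w = Inr (\<not> c)"
      by (rule Inr_other)
  qed
  show "inj_on (ident2 p) (\<sigma> - {Inr c})"
  proof (rule inj_onI)
    fix x y assume xy: "x \<in> \<sigma> - {Inr c}" "y \<in> \<sigma> - {Inr c}" "ident2 p x = ident2 p y"
    from el[OF xy(1)] el[OF xy(2)] xy(3) show "x = y" by auto
  qed
  define \<tau> where "\<tau> = ident2 p ` (\<sigma> - {Inr c})"
  have \<tau>V: "\<tau> \<subseteq> V"
  proof
    fix u assume "u \<in> \<tau>"
    then obtain w where w: "w \<in> \<sigma> - {Inr c}" "ident2 p w = u" unfolding \<tau>_def by blast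
    from el[OF w(1)] w pV show "u \<in> V" by auto
  qed
  have fin: "finite \<tau>" by (rule finite_subset[OF \<tau>V finV])
  have Inl_in: "Inl u \<in> \<sigma>" if u: "u \<in> \<tau>" "u \<noteq> p" for u
  proof -
    obtain w where w: "w \<in> \<sigma> - {Inr c}" "ident2 p w = u" using u(1) unfolding \<tau>_def by blast
    from el[OF w(1)] w u show ?thesis by auto
  qed
  show "ident2 p ` (\<sigma> - {Inr c}) \<in> K"
  proof (rule ccontr)
    assume "ident2 p ` (\<sigma> - {Inr c}) \<notin> K"
    then obtain \<rho> where \<rho>: "\<rho> \<subseteq> \<tau>" "\<rho> \<in> min_nonfaces K V"
      using exists_mnf[OF fin \<tau>V] unfolding \<tau>_def by blast
    have sub1: "Inl ` (\<rho> - {p}) \<subseteq> \<sigma>" using Inl_in \<rho> by blast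
    have nf: "\<forall>t\<in>wed_min_nonfaces K V p. \<not> t \<subseteq> \<sigma>" using \<sigma> unfolding wed_def by simp
    show False
    proof (cases "p \<in> \<rho>")
      case False
      hence "Inl ` \<rho> \<in> {Inl ` \<tau> | \<tau>. \<tau> \<in> min_nonfaces K V \<and> p \<notin> \<tau>}" using \<rho>(2) by blast
      hence "Inl ` \<rho> \<in> wed_min_nonfaces K V p" unfolding wed_min_nonfaces_def by (rule UnI1)
      moreover have "Inl ` \<rho> \<subseteq> \<sigma>" using sub1 False by simp
      ultimately show False using nf by blast
    next
      case True
      have "p \<in> \<tau>" by (rule subsetD[OF \<rho>(1) True])
      then obtain w where w: "w \<in> \<sigma> - {Inr c}" "ident2 p w = p" unfolding \<tau>_def by (rule imageE) simp
      have "w = Inr (\<not> c)" using el[OF w(1)] w(2) by (elim disjE exE) auto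
      hence "Inr (\<not> c) \<in> \<sigma>" using w(1) by simp
      hence p12: "{Inr False, Inr True} \<subseteq> \<sigma>" using c by (cases c) simp_all
      have "Inl ` (\<rho> - {p}) \<union> {Inr False, Inr True} \<in> {Inl ` (\<tau> - {p}) \<union> {p1, p2} | \<tau>. \<tau> \<in> min_nonfaces K V \<and> p \<in> \<tau>}"
        using \<rho>(2) True by (intro CollectI exI[of _ \<rho>]) simp
      hence W: "Inl ` (\<rho> - {p}) \<union> {Inr False, Inr True} \<in> wed_min_nonfaces K V p"
        unfolding wed_min_nonfaces_def by (rule UnI2)
      have "Inl ` (\<rho> - {p}) \<union> {Inr False, Inr True} \<subseteq> \<sigma>" using sub1 p12 by (rule Un_least)
      thus False using nf W by (rule_tac bspec[OF nf W, THEN notE])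
    qed
  qed
qed

lemma vspan_single: "vspan f {q} = {vzero, f q}"
proof
  show "vspan f {q} \<subseteq> {vzero, f q}"
  proof
    fix x assume "x \<in> vspan f {q}"
    then obtain T where T: "x = vsum f T" "T \<subseteq> {q}" unfolding vspan_def by auto
    have "T = {} \<or> T = {q}" using T(2) by (simp add: subset_singleton_iff)
    thus "x \<in> {vzero, f q}" using T(1) by (elim disjE) simp_all
  qed
  have "vsum f {} \<in> vspan f {q}" unfolding vspan_def by (intro CollectI exI[of _ "{}"]) simp
  moreover have "vsum f {q} \<in> vspan f {q}" unfolding vspan_def by (intro CollectI exI[of _ "{q}"]) simp
  ultimately show "{vzero, f q} \<subseteq> vspan f {q}" by simp
qed

lemma charmap_basic:
  assumes "char_map K V n lam" "v \<in> V" "{v} \<in> K"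
  shows "lam v \<in> vec n" "lam v \<noteq> vzero"
proof -
  show "lam v \<in> vec n" using assms unfolding char_map_def by blast
  have "lin_indep lam {v}" using assms unfolding char_map_def by blast
  hence "vsum lam {v} \<noteq> vzero" unfolding lin_indep_def by blast
  thus "lam v \<noteq> vzero" by simp
qed

lemma vadd_swap: "(vadd x a = b) = (vadd x b = a)"
  unfolding vadd_def fun_eq_iff by blast

lemma finite_wed_verts: "finite V \<Longrightarrow> finite (wed_verts V p)"
  unfolding wed_verts_def by simp

lemma adj_char:
  assumes mnf: "\<forall>\<tau>\<in>min_nonfaces K V. 2 \<le> card \<tau>"
    and cm: "char_map (wed K V p) (wed_verts V p) 3 \<Lambda>"
    and pj: "proj_DJ (wed K V p) 3 \<Lambda> {Inr c} (lam \<circ> ident2 p)"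
    and v: "v \<in> V" "v \<noteq> p"
  shows "(lam v = lam p) = (vadd (\<Lambda> (Inl v)) (\<Lambda> (Inr (\<not> c))) = \<Lambda> (Inr c))"
proof -
  have cd: "(3::nat) - card {Inr c :: 'a + bool} = 2" by simp
  from pj obtain \<mu> \<psi> \<phi> where
    lin: "linear_z2 3 2 \<psi>" and ker: "{x\<in>vec 3. \<psi> x = vzero} = vspan \<Lambda> {Inr c}"
    and mu: "\<forall>w\<in>link_verts (wed K V p) {Inr c}. \<mu> w = \<psi> (\<Lambda> w)"
    and gl: "GL_z2 2 \<phi>" and dj: "\<forall>w\<in>link_verts (wed K V p) {Inr c}. (lam \<circ> ident2 p) w = \<phi> (\<mu> w)"
    unfolding proj_DJ_def is_proj_def DJ_equiv_def cd by blast
  have l1: "Inl v \<in> link_verts (wed K V p) {Inr c}" by (rule link_wed_Inl[OF mnf v])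
  have l2: "Inr (\<not> c) \<in> link_verts (wed K V p) {Inr c}" by (rule link_wed_Inr[OF mnf])
  have e1: "lam v = \<phi> (\<psi> (\<Lambda> (Inl v)))" using bspec[OF dj l1] bspec[OF mu l1] by simp
  have e2: "lam p = \<phi> (\<psi> (\<Lambda> (Inr (\<not> c))))" using bspec[OF dj l2] bspec[OF mu l2] by simp
  have wv: "Inl v \<in> wed_verts V p" "Inr c \<in> wed_verts V p" "Inr (\<not> c) \<in> wed_verts V p"
    using v by (auto simp: wed_verts_def)
  have cmv: "\<forall>w\<in>wed_verts V p. \<Lambda> w \<in> vec 3" using cm unfolding char_map_def by blast
  have x: "\<Lambda> (Inl v) \<in> vec 3" "\<Lambda> (Inr (\<not> c)) \<in> vec 3" "\<Lambda> (Inr c) \<in> vec 3"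
    using cmv wv by blast+
  have linv: "\<forall>x\<in>vec 3. \<psi> x \<in> vec 2" and lina: "\<forall>x\<in>vec 3. \<forall>y\<in>vec 3. \<psi> (vadd x y) = vadd (\<psi> x) (\<psi> y)"
    using lin unfolding linear_z2_def by blast+
  have y: "\<psi> (\<Lambda> (Inl v)) \<in> vec 2" "\<psi> (\<Lambda> (Inr (\<not> c))) \<in> vec 2" using linv x by blast+
  have inj: "inj_on \<phi> (vec 2)" using GL_facts(4)[OF gl] .
  have xx: "vadd (\<Lambda> (Inl v)) (\<Lambda> (Inr (\<not> c))) \<in> vec 3" using x by (simp add: vadd_vec)
  have pair: "{Inl v, Inr (\<not> c)} \<in> wed K V p" by (rule wed_pair[OF mnf v])
  have "lin_indep \<Lambda> {Inl v, Inr (\<not> c)}" using cm pair unfolding char_map_def by blast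
  hence "inj_on \<Lambda> {Inl v, Inr (\<not> c)}" unfolding lin_indep_def by blast
  hence neq: "\<Lambda> (Inl v) \<noteq> \<Lambda> (Inr (\<not> c))" unfolding inj_on_def by blast
  have "(lam v = lam p) = (\<psi> (\<Lambda> (Inl v)) = \<psi> (\<Lambda> (Inr (\<not> c))))"
    unfolding e1 e2 using inj y by (simp add: inj_on_eq_iff)
  also have "\<dots> = (\<psi> (vadd (\<Lambda> (Inl v)) (\<Lambda> (Inr (\<not> c)))) = vzero)"
    using lina x by (simp add: vadd_eq_zero)
  also have "\<dots> = (vadd (\<Lambda> (Inl v)) (\<Lambda> (Inr (\<not> c))) \<in> {vzero, \<Lambda> (Inr c)})"
  proof -
    have "(\<psi> (vadd (\<Lambda> (Inl v)) (\<Lambda> (Inr (\<not> c)))) = vzero) =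
      (vadd (\<Lambda> (Inl v)) (\<Lambda> (Inr (\<not> c))) \<in> {x\<in>vec 3. \<psi> x = vzero})" using xx by simp
    thus ?thesis unfolding ker vspan_single .
  qed
  also have "\<dots> = (vadd (\<Lambda> (Inl v)) (\<Lambda> (Inr (\<not> c))) = \<Lambda> (Inr c))"
    using neq by (simp add: vadd_eq_zero)
  finally show ?thesis .
qed

lemma face_route:
  assumes finV: "finite V" and pV: "p \<in> V" and \<sigma>: "\<sigma> \<in> wed K V p" and c: "Inr c \<in> \<sigma>"
    and cmK: "char_map K V 2 lam"
    and lphi: "linear_z2 2 2 \<phi>" and lpsi: "linear_z2 3 2 \<psi>"
    and vals: "\<forall>w\<in>wed_verts V p. \<Lambda> w \<in> vec 3"
    and z: "\<psi> (\<Lambda> (Inr c)) = vzero" and nz: "\<Lambda> (Inr c) \<noteq> vzero"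
    and id: "\<forall>w\<in>wed_verts V p - {Inr c}. lam (ident2 p w) = \<phi> (\<psi> (\<Lambda> w))"
  shows "lin_indep \<Lambda> \<sigma>"
proof -
  have sv: "\<sigma> \<subseteq> wed_verts V p" by (rule wed_sub_verts[OF \<sigma>])
  have fin: "finite \<sigma>" by (rule finite_subset[OF sv finite_wed_verts[OF finV]])
  have f1: "ident2 p ` (\<sigma> - {Inr c}) \<in> K" and f2: "inj_on (ident2 p) (\<sigma> - {Inr c})"
    using wed_face_proj[OF finV pV \<sigma> c] by blast+
  have "lin_indep lam (ident2 p ` (\<sigma> - {Inr c}))" using cmK f1 unfolding char_map_def by blast
  hence li1: "lin_indep (lam \<circ> ident2 p) (\<sigma> - {Inr c})" using f2 by (rule lin_indep_image)
  have eq: "\<forall>w\<in>\<sigma> - {Inr c}. (lam \<circ> ident2 p) w = (\<phi> \<circ> (\<psi> \<circ> \<Lambda>)) w"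
  proof
    fix w assume "w \<in> \<sigma> - {Inr c}"
    hence "w \<in> wed_verts V p - {Inr c}" using sv by blast
    thus "(lam \<circ> ident2 p) w = (\<phi> \<circ> (\<psi> \<circ> \<Lambda>)) w" using id by simp
  qed
  have li2: "lin_indep (\<phi> \<circ> (\<psi> \<circ> \<Lambda>)) (\<sigma> - {Inr c})" by (rule lin_indep_cong[OF li1 eq])
  have v2: "\<forall>x\<in>\<sigma> - {Inr c}. (\<psi> \<circ> \<Lambda>) x \<in> vec 2"
  proof
    fix x assume "x \<in> \<sigma> - {Inr c}"
    hence "\<Lambda> x \<in> vec 3" using sv vals by blast
    thus "(\<psi> \<circ> \<Lambda>) x \<in> vec 2" using lpsi unfolding linear_z2_def by simp
  qed
  have li3: "lin_indep (\<psi> \<circ> \<Lambda>) (\<sigma> - {Inr c})" by (rule lin_indep_pull[OF lphi v2 li2])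
  have v3: "\<forall>x\<in>\<sigma>. \<Lambda> x \<in> vec 3" using sv vals by blast
  show ?thesis by (rule lin_indep_lift[OF lpsi v3 c z nz fin li3])
qed

lemma construct:
  fixes K :: "'a set set" and lam1 lam2 :: "'a \<Rightarrow> z2vec"
  assumes finV: "finite V" and pV: "p \<in> V" and mnf: "\<forall>\<tau>\<in>min_nonfaces K V. 2 \<le> card \<tau>"
    and c1: "char_map K V 2 lam1" and c2: "char_map K V 2 lam2"
    and sing: "\<forall>v\<in>V. {v} \<in> K"
    and S: "supp V lam1 p = supp V lam2 p"
  shows "p_adjacent K V 2 p lam1 lam2"
proof -
  have v1: "lam1 v \<in> vec 2" "lam1 v \<noteq> vzero" if "v \<in> V" for v
    using charmap_basic[OF c1 that] sing that by blast+
  have v2: "lam2 v \<in> vec 2" "lam2 v \<noteq> vzero" if "v \<in> V" for v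
    using charmap_basic[OF c2 that] sing that by blast+
  define a where "a = lam1 p"
  define b where "b = lam2 p"
  have a: "a \<in> vec 2" "a \<noteq> vzero" using v1[OF pV] unfolding a_def by blast+
  have b: "b \<in> vec 2" "b \<noteq> vzero" using v2[OF pV] unfolding b_def by blast+
  obtain \<phi> where gl: "GL_z2 2 \<phi>" and \<phi>a: "\<phi> a = b" using GL_exists[OF a(1) b(1) a(2) b(2)] by blast
  note G = GL_facts[OF gl]
  define t where "t v = (\<phi> (lam1 v) \<noteq> lam2 v)" for v
  have key: "\<phi> (if t v then vadd (lam1 v) a else lam1 v) = lam2 v" if vV: "v \<in> V" "v \<noteq> p" for v
  proof (cases "lam1 v = a")
    case True
    hence "v \<in> supp V lam1 p" using vV unfolding supp_def a_def by simp
    hence "v \<in> supp V lam2 p" using S by simp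
    hence "lam2 v = b" unfolding supp_def b_def by simp
    thus ?thesis using True \<phi>a unfolding t_def by simp
  next
    case False
    hence "v \<notin> supp V lam1 p" unfolding supp_def a_def by simp
    hence "v \<notin> supp V lam2 p" using S by simp
    hence nb: "lam2 v \<noteq> b" using vV unfolding supp_def b_def by simp
    show ?thesis
    proof (cases "t v")
      case False thus ?thesis unfolding t_def by simp
    next
      case True
      have x: "lam1 v \<in> vec 2" "lam1 v \<noteq> vzero" using v1 vV by blast+
      have fx: "\<phi> (lam1 v) \<in> vec 2" using G(2) x(1) .
      have fnz: "\<phi> (lam1 v) \<noteq> vzero"
      proof
        assume "\<phi> (lam1 v) = vzero"
        hence "\<phi> (lam1 v) = \<phi> vzero" using G(1) by simp
        hence "lam1 v = vzero" using G(4) x(1) vzero_vec unfolding inj_on_def by blast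
        thus False using x(2) by simp
      qed
      have fnb: "\<phi> (lam1 v) \<noteq> b"
      proof
        assume "\<phi> (lam1 v) = b"
        hence "\<phi> (lam1 v) = \<phi> a" using \<phi>a by simp
        hence "lam1 v = a" using G(4) x(1) a(1) unfolding inj_on_def by blast
        thus False using False by simp
      qed
      have "lam2 v = \<phi> (lam1 v) \<or> lam2 v = vadd (\<phi> (lam1 v)) b"
        by (rule vec2_two[OF b(1) fx v2(1)[OF vV(1)] b(2) fnz v2(2)[OF vV(1)] fnb nb])
      hence "lam2 v = vadd (\<phi> (lam1 v)) b" using True unfolding t_def by (elim disjE) auto
      also have "\<dots> = \<phi> (vadd (lam1 v) a)" using G(3)[OF x(1) a(1)] \<phi>a by simp
      finally show ?thesis using True by simp
    qed
  qed
  define e :: z2vec where "e = (\<lambda>i. i = 2)"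
  define A where "A = a(2 := True)"
  define \<Lambda> where "\<Lambda> w = (case w of Inl v \<Rightarrow> (lam1 v)(2 := t v) | Inr c \<Rightarrow> if c then e else A)" for w
  define \<psi>1 :: "z2vec \<Rightarrow> z2vec" where "\<psi>1 x = x(2 := False)" for x
  define \<psi>2 where "\<psi>2 x = (if x 2 then vadd x A else x)" for x
  have \<Lambda>_simps: "\<Lambda> (Inl v) = (lam1 v)(2 := t v)" "\<Lambda> (Inr True) = e" "\<Lambda> (Inr False) = A" for v
    unfolding \<Lambda>_def by simp_all
  have vec2_3: "x \<in> vec 3" if "x \<in> vec 2" for x using that unfolding vec_def by simp
  have vec2_2: "x 2 = False" if "x \<in> vec 2" for x using that unfolding vec_def by simp
  have upd3: "x(2 := c) \<in> vec 3" if "x \<in> vec 2" for x c using that unfolding vec_def by simp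
  have upd0: "x(2 := False) = x" if "x \<in> vec 2" for x using vec2_2[OF that] by (simp add: fun_upd_idem)
  have e3: "e \<in> vec 3" unfolding e_def vec_def by simp
  have A3: "A \<in> vec 3" unfolding A_def by (rule upd3[OF a(1)])
  have enz: "e \<noteq> vzero"
  proof
    assume "e = vzero" hence "e 2 = vzero 2" by simp
    thus False unfolding e_def vzero_def by simp
  qed
  have Anz: "A \<noteq> vzero"
  proof
    assume "A = vzero" hence "A 2 = vzero 2" by simp
    thus False unfolding A_def vzero_def by simp
  qed
  have A2: "A 2" unfolding A_def by simp
  have p1add: "\<psi>1 (vadd x y) = vadd (\<psi>1 x) (\<psi>1 y)" for x y
    unfolding \<psi>1_def vadd_def fun_eq_iff by simp
  have p1vec: "\<psi>1 x \<in> vec 2" if "x \<in> vec 3" for x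
    using that unfolding \<psi>1_def vec_def by (simp add: numeral_3_eq_3)
  have lin1: "linear_z2 3 2 \<psi>1" unfolding linear_z2_def using p1add p1vec by blast
  have im1: "\<psi>1 ` vec 3 = vec 2"
  proof
    show "\<psi>1 ` vec 3 \<subseteq> vec 2" using p1vec by blast
    show "vec 2 \<subseteq> \<psi>1 ` vec 3"
    proof
      fix x assume x: "x \<in> vec 2"
      hence "x = \<psi>1 x" unfolding \<psi>1_def using upd0 by simp
      thus "x \<in> \<psi>1 ` vec 3" using vec2_3[OF x] by blast
    qed
  qed
  have ker1: "{x\<in>vec 3. \<psi>1 x = vzero} = {vzero, e}"
  proof
    show "{x\<in>vec 3. \<psi>1 x = vzero} \<subseteq> {vzero, e}"
    proof
      fix x assume "x \<in> {x\<in>vec 3. \<psi>1 x = vzero}"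
      hence x: "x \<in> vec 3" "x(2 := False) = vzero" unfolding \<psi>1_def by simp_all
      have xi: "\<not> x i" if "i \<noteq> 2" for i using fun_cong[OF x(2), of i] that by (simp add: vzero_def)
      show "x \<in> {vzero, e}"
      proof (cases "x 2")
        case True
        have "x = e"
        proof (rule ext)
          fix i show "x i = e i" using xi[of i] True unfolding e_def by (cases "i = 2") auto
        qed
        thus ?thesis by simp
      next
        case False
        have "x = vzero"
        proof (rule ext)
          fix i show "x i = vzero i" using xi[of i] False unfolding vzero_def by (cases "i = 2") auto
        qed
        thus ?thesis by simp
      qed
    qed
    have "\<psi>1 vzero = vzero" "\<psi>1 e = vzero" unfolding \<psi>1_def e_def vzero_def fun_eq_iff by simp_all
    thus "{vzero, e} \<subseteq> {x\<in>vec 3. \<psi>1 x = vzero}" using e3 by simp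
  qed
  have p2add: "\<psi>2 (vadd x y) = vadd (\<psi>2 x) (\<psi>2 y)" for x y
  proof (rule ext)
    fix i show "\<psi>2 (vadd x y) i = vadd (\<psi>2 x) (\<psi>2 y) i"
      unfolding \<psi>2_def vadd_def by (cases "x 2"; cases "y 2"; simp; blast)
  qed
  have p2vec: "\<psi>2 x \<in> vec 2" if "x \<in> vec 3" for x
  proof -
    have "\<forall>i\<ge>3. \<not> x i" "\<forall>i\<ge>3. \<not> A i" using that A3 unfolding vec_def by simp_all
    hence h: "\<not> x i" "\<not> A i" if "i \<ge> 2" "i \<noteq> 2" for i using that by auto
    have "\<not> \<psi>2 x i" if "i \<ge> 2" for i
    proof (cases "i = 2")
      case True thus ?thesis unfolding \<psi>2_def vadd_def using A2 by simp
    next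
      case False thus ?thesis unfolding \<psi>2_def vadd_def using h[OF that False] by simp
    qed
    thus ?thesis unfolding vec_def by simp
  qed
  have lin2: "linear_z2 3 2 \<psi>2" unfolding linear_z2_def using p2add p2vec by blast
  have p2id: "\<psi>2 x = x" if "x \<in> vec 2" for x unfolding \<psi>2_def using vec2_2[OF that] by simp
  have im2: "\<psi>2 ` vec 3 = vec 2"
  proof
    show "\<psi>2 ` vec 3 \<subseteq> vec 2" using p2vec by blast
    show "vec 2 \<subseteq> \<psi>2 ` vec 3"
    proof
      fix x assume x: "x \<in> vec 2"
      hence "x = \<psi>2 x" using p2id by simp
      thus "x \<in> \<psi>2 ` vec 3" using vec2_3[OF x] by blast
    qed
  qed
  have ker2: "{x\<in>vec 3. \<psi>2 x = vzero} = {vzero, A}"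
  proof
    show "{x\<in>vec 3. \<psi>2 x = vzero} \<subseteq> {vzero, A}"
    proof
      fix x assume "x \<in> {x\<in>vec 3. \<psi>2 x = vzero}"
      hence x: "\<psi>2 x = vzero" by simp
      show "x \<in> {vzero, A}"
      proof (cases "x 2")
        case True
        hence "vadd x A = vzero" using x unfolding \<psi>2_def by simp
        thus ?thesis by (simp add: vadd_eq_zero)
      next
        case False
        hence "x = vzero" using x unfolding \<psi>2_def by simp
        thus ?thesis by simp
      qed
    qed
    have "\<psi>2 vzero = vzero" unfolding \<psi>2_def vzero_def by simp
    moreover have "\<psi>2 A = vzero" unfolding \<psi>2_def using A2 by simp
    ultimately show "{vzero, A} \<subseteq> {x\<in>vec 3. \<psi>2 x = vzero}" using A3 by simp
  qed
  have vals: "\<forall>w\<in>wed_verts V p. \<Lambda> w \<in> vec 3"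
  proof
    fix w assume "w \<in> wed_verts V p"
    hence "w \<in> Inl ` (V - {p}) \<or> w = Inr False \<or> w = Inr True" by (auto simp: wed_verts_def)
    thus "\<Lambda> w \<in> vec 3"
    proof (elim disjE)
      assume "w \<in> Inl ` (V - {p})"
      then obtain v where "v \<in> V" "w = Inl v" by blast
      thus ?thesis using upd3[OF v1(1)] \<Lambda>_simps by simp
    qed (simp_all add: \<Lambda>_simps e3 A3)
  qed
  have p1L: "\<psi>1 (\<Lambda> (Inl v)) = lam1 v" if "v \<in> V" for v
    unfolding \<Lambda>_simps \<psi>1_def using upd0[OF v1(1)[OF that]] by simp
  have p1A: "\<psi>1 A = lam1 p" unfolding \<psi>1_def A_def a_def using upd0[OF v1(1)[OF pV]] by simp
  have p2L: "\<psi>2 (\<Lambda> (Inl v)) = (if t v then vadd (lam1 v) a else lam1 v)" if "v \<in> V" for v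
  proof (cases "t v")
    case True
    have "vadd ((lam1 v)(2 := True)) A = vadd (lam1 v) a"
      unfolding A_def vadd_def fun_eq_iff using vec2_2[OF v1(1)[OF that]] vec2_2[OF a(1)] by simp
    thus ?thesis using True unfolding \<Lambda>_simps \<psi>2_def by simp
  next
    case False
    thus ?thesis unfolding \<Lambda>_simps \<psi>2_def using upd0[OF v1(1)[OF that]] vec2_2[OF v1(1)[OF that]] by simp
  qed
  have p1e: "\<psi>1 e = vzero"
  proof (rule ext)
    fix i show "\<psi>1 e i = vzero i" unfolding \<psi>1_def e_def vzero_def by simp
  qed
  have p2A: "\<psi>2 A = vzero" unfolding \<psi>2_def using A2 by simp
  have p2e: "\<psi>2 e = a" unfolding \<psi>2_def e_def A_def vadd_def fun_eq_iff using vec2_2[OF a(1)] by simp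
  have id1: "\<forall>w\<in>wed_verts V p - {Inr True}. lam1 (ident2 p w) = id (\<psi>1 (\<Lambda> w))"
  proof
    fix w assume w: "w \<in> wed_verts V p - {Inr True}"
    have "w \<in> wed_verts V p" "w \<noteq> Inr True" using w by simp_all
    hence "(\<exists>v. w = Inl v \<and> v \<in> V \<and> v \<noteq> p) \<or> w = Inr (\<not> True)" by (rule Inr_other)
    thus "lam1 (ident2 p w) = id (\<psi>1 (\<Lambda> w))"
    proof (elim disjE exE conjE)
      fix v assume "w = Inl v" "v \<in> V" "v \<noteq> p"
      thus ?thesis using p1L by simp
    next
      assume "w = Inr (\<not> True)"
      thus ?thesis using p1A \<Lambda>_simps by simp
    qed
  qed
  have id2: "\<forall>w\<in>wed_verts V p - {Inr False}. lam2 (ident2 p w) = \<phi> (\<psi>2 (\<Lambda> w))"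
  proof
    fix w assume w: "w \<in> wed_verts V p - {Inr False}"
    have "w \<in> wed_verts V p" "w \<noteq> Inr False" using w by simp_all
    hence "(\<exists>v. w = Inl v \<and> v \<in> V \<and> v \<noteq> p) \<or> w = Inr (\<not> False)" by (rule Inr_other)
    thus "lam2 (ident2 p w) = \<phi> (\<psi>2 (\<Lambda> w))"
    proof (elim disjE exE conjE)
      fix v assume "w = Inl v" "v \<in> V" "v \<noteq> p"
      thus ?thesis using key p2L by simp
    next
      assume "w = Inr (\<not> False)"
      thus ?thesis using p2e \<phi>a \<Lambda>_simps unfolding b_def by simp
    qed
  qed
  have linid: "linear_z2 2 2 id" unfolding linear_z2_def by simp
  have glid: "GL_z2 2 id" unfolding GL_z2_def using linid by simp
  have faces: "lin_indep \<Lambda> \<sigma>" if \<sigma>: "\<sigma> \<in> wed K V p" for \<sigma>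
  proof (cases "Inr False \<in> \<sigma>")
    case True
    show ?thesis
      by (rule face_route[OF finV pV \<sigma> True c2 G(5) lin2 vals _ _ id2])
        (simp_all add: \<Lambda>_simps p2A Anz)
  next
    case False
    have \<sigma>': "insert (Inr True) \<sigma> \<in> wed K V p" using wed_insert[OF \<sigma>, of True] False by simp
    have "lin_indep \<Lambda> (insert (Inr True) \<sigma>)"
      by (rule face_route[OF finV pV \<sigma>' _ c1 linid lin1 vals _ _ id1])
        (simp_all add: \<Lambda>_simps p1e enz)
    thus ?thesis by (rule lin_indep_subset) blast
  qed
  have cm: "char_map (wed K V p) (wed_verts V p) 3 \<Lambda>"
    unfolding char_map_def using vals faces by blast
  have cd: "(3::nat) - card {Inr c :: 'a + bool} = 2" for c by simp
  have pr1: "proj_DJ (wed K V p) 3 \<Lambda> {Inr True} (lam1 \<circ> ident2 p)"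
    unfolding proj_DJ_def is_proj_def DJ_equiv_def cd
  proof (intro exI conjI)
    show "linear_z2 3 2 \<psi>1" by (rule lin1)
    show "\<psi>1 ` vec 3 = vec 2" by (rule im1)
    show "{x\<in>vec 3. \<psi>1 x = vzero} = vspan \<Lambda> {Inr True}" unfolding vspan_single ker1 \<Lambda>_simps ..
    show "\<forall>w\<in>link_verts (wed K V p) {Inr True}. (\<psi>1 \<circ> \<Lambda>) w = \<psi>1 (\<Lambda> w)" by simp
    show "GL_z2 2 id" by (rule glid)
    show "\<forall>w\<in>link_verts (wed K V p) {Inr True}. (lam1 \<circ> ident2 p) w = id ((\<psi>1 \<circ> \<Lambda>) w)"
    proof
      fix w assume "w \<in> link_verts (wed K V p) {Inr True}"
      hence "(\<exists>v. w = Inl v \<and> v \<in> V \<and> v \<noteq> p) \<or> w = Inr (\<not> True)" by (rule link_wed_cases)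
      hence "w \<in> wed_verts V p - {Inr True}" by (auto simp: wed_verts_def)
      thus "(lam1 \<circ> ident2 p) w = id ((\<psi>1 \<circ> \<Lambda>) w)" using id1 by simp
    qed
  qed
  have pr2: "proj_DJ (wed K V p) 3 \<Lambda> {Inr False} (lam2 \<circ> ident1 p)"
    unfolding proj_DJ_def is_proj_def DJ_equiv_def cd ident1_eq
  proof (intro exI conjI)
    show "linear_z2 3 2 \<psi>2" by (rule lin2)
    show "\<psi>2 ` vec 3 = vec 2" by (rule im2)
    show "{x\<in>vec 3. \<psi>2 x = vzero} = vspan \<Lambda> {Inr False}" unfolding vspan_single ker2 \<Lambda>_simps ..
    show "\<forall>w\<in>link_verts (wed K V p) {Inr False}. (\<psi>2 \<circ> \<Lambda>) w = \<psi>2 (\<Lambda> w)" by simp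
    show "GL_z2 2 \<phi>" by (rule gl)
    show "\<forall>w\<in>link_verts (wed K V p) {Inr False}. (lam2 \<circ> ident2 p) w = \<phi> ((\<psi>2 \<circ> \<Lambda>) w)"
    proof
      fix w assume "w \<in> link_verts (wed K V p) {Inr False}"
      hence "(\<exists>v. w = Inl v \<and> v \<in> V \<and> v \<noteq> p) \<or> w = Inr (\<not> False)" by (rule link_wed_cases)
      hence "w \<in> wed_verts V p - {Inr False}" by (auto simp: wed_verts_def)
      thus "(lam2 \<circ> ident2 p) w = \<phi> ((\<psi>2 \<circ> \<Lambda>) w)" using id2 by simp
    qed
  qed
  have n3: "(2::nat) + 1 = 3" by simp
  show ?thesis unfolding p_adjacent_def n3 using cm pr1 pr2 by blast
qed

lemma polygon_mnf: "\<forall>\<tau>\<in>min_nonfaces (polygon m) {1..m}. 2 \<le> card \<tau>"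
proof
  fix \<tau> assume t: "\<tau> \<in> min_nonfaces (polygon m) {1..m}"
  hence "\<tau> \<subseteq> {1..m}" "\<tau> \<notin> polygon m" unfolding min_nonfaces_def by simp_all
  hence "\<not> card \<tau> \<le> 1" unfolding polygon_def by blast
  thus "2 \<le> card \<tau>" by simp
qed

lemma polygon_sing: "\<forall>v\<in>{1..m}. {v} \<in> polygon m"
  unfolding polygon_def by simp

theorem lemma3:
  fixes m p :: nat and lam1 lam2 :: "nat \<Rightarrow> z2vec"
  assumes "m \<ge> 3" and "p \<in> {1..m}"
    and "char_map (polygon m) {1..m} 2 lam1"
    and "char_map (polygon m) {1..m} 2 lam2"
  shows "p_adjacent (polygon m) {1..m} 2 p lam1 lam2 \<longleftrightarrow>
         supp {1..m} lam1 p = supp {1..m} lam2 p"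
proof
  have mnf: "\<forall>\<tau>\<in>min_nonfaces (polygon m) {1..m}. 2 \<le> card \<tau>" by (rule polygon_mnf)
  have n3: "(2::nat) + 1 = 3" by simp
  assume "p_adjacent (polygon m) {1..m} 2 p lam1 lam2"
  then obtain \<Lambda> where cm: "char_map (wed (polygon m) {1..m} p) (wed_verts {1..m} p) 3 \<Lambda>"
    and pj1: "proj_DJ (wed (polygon m) {1..m} p) 3 \<Lambda> {Inr True} (lam1 \<circ> ident2 p)"
    and pj2: "proj_DJ (wed (polygon m) {1..m} p) 3 \<Lambda> {Inr False} (lam2 \<circ> ident2 p)"
    unfolding p_adjacent_def n3 ident1_eq by blast
  have eq: "(lam1 v = lam1 p) = (lam2 v = lam2 p)" if v: "v \<in> {1..m}" for v
  proof (cases "v = p")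
    case True thus ?thesis by simp
  next
    case False
    have a: "(lam1 v = lam1 p) = (vadd (\<Lambda> (Inl v)) (\<Lambda> (Inr False)) = \<Lambda> (Inr True))"
      using adj_char[OF mnf cm pj1 v False] by simp
    have b: "(lam2 v = lam2 p) = (vadd (\<Lambda> (Inl v)) (\<Lambda> (Inr True)) = \<Lambda> (Inr False))"
      using adj_char[OF mnf cm pj2 v False] by simp
    show ?thesis unfolding a b by (rule vadd_swap)
  qed
  show "supp {1..m} lam1 p = supp {1..m} lam2 p"
    unfolding supp_def using eq by blast
next
  have mnf: "\<forall>\<tau>\<in>min_nonfaces (polygon m) {1..m}. 2 \<le> card \<tau>" by (rule polygon_mnf)
  assume S: "supp {1..m} lam1 p = supp {1..m} lam2 p"
  show "p_adjacent (polygon m) {1..m} 2 p lam1 lam2"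
    by (rule construct[OF _ assms(2) mnf assms(3) assms(4) polygon_sing S]) simp
qed

end
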